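(* Let $(\Omega,\mathcal{F},\mathbb{P})$ be a probability space, let $d\in\mathbb{N}$, $\eta\in(0,1)$, let $X_n\colon\Omega\to\mathbb{R}^d$, $n\in\mathbb{N}$, be i.i.d. random variables with $\mathbb{E}[\|X_1\|]<\infty$, let $A=\{\sum_{n=1}^\infty\eta(1-\eta)^{n-1}\|X_n\|<\infty\}$, and let $\chi\colon\Omega\to\mathbb{R}^d$ be a random variable satisfying $\chi(\omega)=\sum_{n=1}^\infty\eta(1-\eta)^{n-1}X_n(\omega)$ for all $\omega\in A$. Then (i) $A\in\mathcal{F}$ and $\mathbb{P}(A)=1$, and (ii) $\operatorname{supp}(X_1)\subseteq\operatorname{supp}(\chi)$.
   Context: For a Borel measure $\mu$ on $\mathbb{R}^d$, $\operatorname{supp}(\mu)=\{x\in\mathbb{R}^d\colon\mu(B)>0\text{ for every open }B\ni x\}$. For a random variable $X$, $\operatorname{supp}(X)=\operatorname{supp}(\mathbb{P}_X)$ where $\mathbb{P}_X$ is the law of $X$. $\|\cdot\|$ is the Euclidean norm. *)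

theory Defs
  imports "HOL-Probability.Probability"
begin

definition measure_support :: "'a::topological_space measure \<Rightarrow> 'a set" where
  "measure_support \<mu> = {x. \<forall>B. open B \<longrightarrow> x \<in> B \<longrightarrow> emeasure \<mu> B > 0}"

definition rv_support :: "'b measure \<Rightarrow> ('b \<Rightarrow> 'a::topological_space) \<Rightarrow> 'a set" where
  "rv_support M X = measure_support (distr M borel X)"

end

theory Submission
  imports Defs
begin

lemma key_ineq:
  fixes Y :: "nat \<Rightarrow> 'a::banach" and c :: "nat \<Rightarrow> real"
  assumes cs: "c sums 1" and c0: "\<And>n. 0 \<le> c n"
    and sY: "summable (\<lambda>n. c n * norm (Y n))"
    and first: "\<And>n. n < K \<Longrightarrow> norm (Y n - x) < \<delta>"
    and tail: "(\<Sum>n. ennreal (c (n+K) * norm (Y (n+K) - x))) < ennreal \<delta>'"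
    and d0: "0 \<le> \<delta>"
  shows "norm ((\<Sum>n. c n *\<^sub>R Y n) - x) < \<delta> + \<delta>'"
proof -
  have s1: "summable (\<lambda>n. c n *\<^sub>R Y n)"
    by (rule summable_norm_cancel) (use sY c0 in simp)
  have s2: "summable (\<lambda>n. c n *\<^sub>R x)" and e2: "(\<Sum>n. c n *\<^sub>R x) = x"
    using sums_scaleR_left[OF cs, of x] by (auto simp: sums_iff)
  have eq: "(\<Sum>n. c n *\<^sub>R Y n) - x = (\<Sum>n. c n *\<^sub>R (Y n - x))"
    using suminf_diff[OF s1 s2] e2 by (simp add: scaleR_diff_right)
  define g where "g n = c n * norm (Y n - x)" for n
  have g0: "\<And>n. 0 \<le> g n" using c0 by (simp add: g_def)
  have sg: "summable g"
  proof (rule summable_comparison_test[where g="\<lambda>n. c n * norm (Y n) + c n * norm x"])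
    show "\<exists>N. \<forall>n\<ge>N. norm (g n) \<le> c n * norm (Y n) + c n * norm x"
      using c0 g0 norm_triangle_ineq4[of "Y _" x]
      by (auto simp: g_def distrib_left[symmetric] intro!: mult_left_mono)
    show "summable (\<lambda>n. c n * norm (Y n) + c n * norm x)"
      using sY cs by (intro summable_add summable_mult2) (auto simp: sums_iff)
  qed
  have "norm ((\<Sum>n. c n *\<^sub>R Y n) - x) \<le> (\<Sum>n. g n)"
  proof -
    have nn: "(\<lambda>n. norm (c n *\<^sub>R (Y n - x))) = g" using c0 by (auto simp: g_def)
    show ?thesis unfolding eq using summable_norm[of "\<lambda>n. c n *\<^sub>R (Y n - x)"] sg
      unfolding nn by simp
  qed
  moreover have "(\<Sum>n. g n) = (\<Sum>n. g (n + K)) + (\<Sum>i<K. g i)"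
    by (rule suminf_split_initial_segment[OF sg])
  moreover have "(\<Sum>n. g (n + K)) < \<delta>'"
  proof -
    have sgK: "summable (\<lambda>n. g (n + K))" by (rule summable_ignore_initial_segment[OF sg])
    have e: "(\<Sum>n. ennreal (g (n+K))) = ennreal (\<Sum>n. g (n+K))"
      by (rule suminf_ennreal2) (use g0 sgK in auto)
    have "(\<Sum>n. ennreal (g (n+K))) < ennreal \<delta>'" using tail unfolding g_def .
    then have "ennreal (\<Sum>n. g (n+K)) < ennreal \<delta>'" unfolding e .
    moreover have "0 \<le> (\<Sum>n. g (n+K))" by (rule suminf_nonneg[OF sgK]) (use g0 in auto)
    ultimately show ?thesis using ennreal_less_iff by blast
  qed
  moreover {
  have "(\<Sum>i<K. g i) \<le> (\<Sum>i<K. c i * \<delta>)"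
    using first c0 by (auto simp: g_def intro!: sum_mono mult_left_mono less_imp_le[OF first])
  also have "\<dots> = \<delta> * (\<Sum>i<K. c i)" by (simp add: sum_distrib_left mult.commute)
  also have "\<dots> \<le> \<delta> * 1"
    using sum_le_suminf[of c "{..<K}"] cs c0 d0 by (intro mult_left_mono) (auto simp: sums_iff)
  finally have "(\<Sum>i<K. g i) \<le> \<delta>" by simp }
  ultimately show ?thesis by linarith
qed


lemma ennreal_sum_ne_top_iff:
  assumes "\<And>n. 0 \<le> f n"
  shows "(\<Sum>n. ennreal (f n)) \<noteq> \<top> \<longleftrightarrow> summable f"
  using summable_suminf_not_top[OF assms] suminf_ennreal2[OF assms] by auto

theorem lemma6p13:
  fixes M :: "'w measure"
    and X :: "nat \<Rightarrow> 'w \<Rightarrow> 'a::euclidean_space"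
    and chi :: "'w \<Rightarrow> 'a"
    and \<eta> :: real
    and A :: "'w set"
  assumes "prob_space M"
    and "0 < \<eta>" and "\<eta> < 1"
    and meas: "\<And>n. X n \<in> borel_measurable M"
    and indep: "prob_space.indep_vars M (\<lambda>_. borel) X UNIV"
    and ident: "\<And>n. distr M borel (X n) = distr M borel (X 0)"
    and integrable: "integrable M (\<lambda>\<omega>. norm (X 0 \<omega>))"
    and A_def: "A = {\<omega> \<in> space M. summable (\<lambda>n. \<eta> * (1 - \<eta>) ^ n * norm (X n \<omega>))}"
    and chi_meas: "chi \<in> borel_measurable M"
    and chi_eq: "\<And>\<omega>. \<omega> \<in> A \<Longrightarrow> chi \<omega> = (\<Sum>n. (\<eta> * (1 - \<eta>) ^ n) *\<^sub>R X n \<omega>)"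
  shows "(A \<in> sets M \<and> measure M A = 1) \<and> rv_support M (X 0) \<subseteq> rv_support M chi"
proof -
  interpret P: prob_space M by fact
  note meas[measurable] chi_meas[measurable]
  define c where "c n = \<eta> * (1-\<eta>)^n" for n
  have c0: "\<And>n. 0 \<le> c n" using assms(2,3) by (simp add: c_def)
  have geo: "(\<lambda>n. (1-\<eta>)^n) sums (1/\<eta>)" using assms(2,3) geometric_sums[of "1-\<eta>"] by simp
  have cs: "c sums 1" unfolding c_def using sums_mult[OF geo, of \<eta>] assms(2) by simp
  have A_alt: "A = {\<omega> \<in> space M. (\<Sum>n. ennreal (c n * norm (X n \<omega>))) \<noteq> \<top>}"
  proof -
    have "(\<Sum>n. ennreal (c n * norm (X n \<omega>))) \<noteq> \<top> \<longleftrightarrow> summable (\<lambda>n. c n * norm (X n \<omega>))" for \<omega>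
      by (rule ennreal_sum_ne_top_iff) (simp add: c0)
    then show ?thesis unfolding A_def c_def by simp
  qed
  have A_sets: "A \<in> sets M" unfolding A_alt by measurable
  have I0: "(\<integral>\<^sup>+\<omega>. ennreal (norm (X 0 \<omega>)) \<partial>M) = ennreal (\<integral>\<omega>. norm (X 0 \<omega>) \<partial>M)"
    by (rule nn_integral_eq_integral[OF integrable]) auto
  have In: "(\<integral>\<^sup>+\<omega>. ennreal (c n * norm (X n \<omega>)) \<partial>M) = ennreal (c n) * ennreal (\<integral>\<omega>. norm (X 0 \<omega>) \<partial>M)" for n
  proof -
    have "(\<integral>\<^sup>+\<omega>. ennreal (norm (X n \<omega>)) \<partial>M) = (\<integral>\<^sup>+y. ennreal (norm y) \<partial>distr M borel (X n))"
      by (simp add: nn_integral_distr)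
    also have "\<dots> = (\<integral>\<^sup>+y. ennreal (norm y) \<partial>distr M borel (X 0))" by (simp only: ident[of n])
    also have "\<dots> = (\<integral>\<^sup>+\<omega>. ennreal (norm (X 0 \<omega>)) \<partial>M)"
      by (simp add: nn_integral_distr)
    finally have "(\<integral>\<^sup>+\<omega>. ennreal (norm (X n \<omega>)) \<partial>M) = ennreal (\<integral>\<omega>. norm (X 0 \<omega>) \<partial>M)"
      using I0 by simp
    moreover have "(\<integral>\<^sup>+\<omega>. ennreal (c n * norm (X n \<omega>)) \<partial>M) = ennreal (c n) * (\<integral>\<^sup>+\<omega>. ennreal (norm (X n \<omega>)) \<partial>M)"
      using c0 by (simp add: ennreal_mult nn_integral_cmult)
    ultimately show ?thesis by simp
  qed
  have "(\<integral>\<^sup>+\<omega>. (\<Sum>n. ennreal (c n * norm (X n \<omega>))) \<partial>M) = (\<Sum>n. \<integral>\<^sup>+\<omega>. ennreal (c n * norm (X n \<omega>)) \<partial>M)"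
    by (rule nn_integral_suminf) measurable
  also have "\<dots> = (\<Sum>n. ennreal (c n)) * ennreal (\<integral>\<omega>. norm (X 0 \<omega>) \<partial>M)"
    unfolding In by simp
  also have "(\<Sum>n. ennreal (c n)) = ennreal 1"
    using suminf_ennreal2[OF c0] cs by (auto simp: sums_iff)
  finally have fin: "(\<integral>\<^sup>+\<omega>. (\<Sum>n. ennreal (c n * norm (X n \<omega>))) \<partial>M) \<noteq> \<infinity>" by simp
  have "AE \<omega> in M. (\<Sum>n. ennreal (c n * norm (X n \<omega>))) \<noteq> \<infinity>"
    by (rule nn_integral_PInf_AE[OF _ fin]) measurable
  then have AEA: "AE \<omega> in M. \<omega> \<in> A" unfolding A_alt by auto
  then have PA: "measure M A = 1" using P.AE_in_set_eq_1 A_sets by simp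
  have "rv_support M (X 0) \<subseteq> rv_support M chi"
  proof
    fix x assume x: "x \<in> rv_support M (X 0)"
    show "x \<in> rv_support M chi"
      unfolding rv_support_def measure_support_def
    proof (intro CollectI allI impI)
      fix B :: "'a set" assume B: "open B" "x \<in> B"
      then obtain \<epsilon> where e: "\<epsilon> > 0" "ball x \<epsilon> \<subseteq> B" by (meson openE)
      define \<delta> where "\<delta> = \<epsilon> / 2"
      have d0: "\<delta> > 0" using e by (simp add: \<delta>_def)
      have q: "P.prob (X n -` ball x \<delta> \<inter> space M) > 0" for n
      proof -
        have "emeasure (distr M borel (X 0)) (ball x \<delta>) > 0"
          using x d0 unfolding rv_support_def measure_support_def by auto
        then have "emeasure (distr M borel (X n)) (ball x \<delta>) > 0" by (simp only: ident[of n])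
        then have "emeasure M (X n -` ball x \<delta> \<inter> space M) > 0"
          by (simp add: emeasure_distr)
        then show ?thesis by (simp add: P.emeasure_eq_measure)
      qed
      define T where "T K \<omega> = (\<Sum>n. ennreal (c (n+K) * norm (X (n+K) \<omega> - x)))" for K \<omega>
      define F where "F K = {\<omega> \<in> space M. T K \<omega> < ennreal \<delta>}" for K
      have F_sets: "F K \<in> sets M" for K unfolding F_def T_def by measurable
      have AF: "A \<subseteq> (\<Union>N. F (Suc N))"
      proof
        fix \<omega> assume w: "\<omega> \<in> A"
        have sY: "summable (\<lambda>n. c n * norm (X n \<omega>))" using w unfolding A_def c_def by auto
        define g where "g n = c n * norm (X n \<omega> - x)" for n
        have g0: "\<And>n. 0 \<le> g n" using c0 by (simp add: g_def)
        have sg: "summable g"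
        proof (rule summable_comparison_test[where g="\<lambda>n. c n * norm (X n \<omega>) + c n * norm x"])
          show "\<exists>N. \<forall>n\<ge>N. norm (g n) \<le> c n * norm (X n \<omega>) + c n * norm x"
            using c0 g0 norm_triangle_ineq4[of "X _ \<omega>" x]
            by (auto simp: g_def distrib_left[symmetric] intro!: mult_left_mono)
          show "summable (\<lambda>n. c n * norm (X n \<omega>) + c n * norm x)"
            using sY cs by (intro summable_add summable_mult2) (auto simp: sums_iff)
        qed
        obtain N where N: "\<And>n. n \<ge> N \<Longrightarrow> norm (\<Sum>i. g (i + n)) < \<delta>"
          using suminf_exist_split[OF d0 sg] by blast
        have sgK: "summable (\<lambda>n. g (n + Suc N))" by (rule summable_ignore_initial_segment[OF sg])
        have "T (Suc N) \<omega> = ennreal (\<Sum>n. g (n + Suc N))"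
          unfolding T_def g_def[symmetric] by (rule suminf_ennreal2) (use g0 sgK in auto)
        moreover have "(\<Sum>n. g (n + Suc N)) < \<delta>"
          using N[of "Suc N"] suminf_nonneg[OF sgK] g0 by auto
        ultimately have "T (Suc N) \<omega> < ennreal \<delta>" using d0 by (simp add: ennreal_lessI)
        with w A_sets sets.sets_into_space have "\<omega> \<in> F (Suc N)" unfolding F_def by auto
        then show "\<omega> \<in> (\<Union>N. F (Suc N))" by blast
      qed
      obtain N where FN: "P.prob (F (Suc N)) > 0"
      proof (rule ccontr)
        assume "\<not> thesis"
        have "P.prob (F (Suc N)) = 0" for N
        proof (rule ccontr)
          assume "P.prob (F (Suc N)) \<noteq> 0"
          then have "0 < P.prob (F (Suc N))" using measure_nonneg[of M "F (Suc N)"] by linarith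
          then show False using that \<open>\<not> thesis\<close> by blast
        qed
        then have "emeasure M (F (Suc N)) = 0" for N by (simp add: P.emeasure_eq_measure)
        then have "emeasure M (\<Union>N. F (Suc N)) = 0"
          by (intro emeasure_UN_eq_0) (auto intro: F_sets)
        moreover have "emeasure M A \<le> emeasure M (\<Union>N. F (Suc N))"
          using AF F_sets by (intro emeasure_mono) auto
        ultimately show False using PA by (simp add: P.emeasure_eq_measure)
      qed
      define K where "K = Suc N"
      define E where "E = (\<Inter>n<K. X n -` ball x \<delta> \<inter> space M)"
      define G where "G i = {X i -` S \<inter> space M | S. S \<in> sets (borel :: 'a measure)}" for i
      define I where "I b = (if b then {..<K} else {K..})" for b
      have indG: "P.indep_sets G UNIV"
        using indep unfolding P.indep_vars_def2 G_def by simp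
      have ind2: "P.indep_sets (\<lambda>b. sigma_sets (space M) (\<Union>i\<in>I b. G i)) UNIV"
      proof (rule P.indep_sets_collect_sigma)
        have "(\<Union>j\<in>UNIV. I j) = UNIV" by (auto simp: I_def)
        then show "P.indep_sets G (\<Union>j\<in>UNIV. I j)" using indG by simp
        show "Int_stable (G i)" for i
          unfolding G_def Int_stable_def
          apply safe
          subgoal for a b S S'
            by (rule_tac x="S \<inter> S'" in exI) auto
          done
        show "disjoint_family_on I UNIV"
          unfolding disjoint_family_on_def I_def by auto
      qed
      have E_in: "E \<in> sigma_sets (space M) (\<Union>i\<in>I True. G i)"
      proof -
        interpret S: sigma_algebra "space M" "sigma_sets (space M) (\<Union>i\<in>I True. G i)"
          by (rule sigma_algebra_sigma_sets) (auto simp: G_def)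
        show ?thesis unfolding E_def
        proof (rule S.finite_INT)
          show "{..<K} \<noteq> {}" by (auto simp: K_def)
          fix n assume n: "n \<in> {..<K}"
          show "X n -` ball x \<delta> \<inter> space M \<in> sigma_sets (space M) (\<Union>i\<in>I True. G i)"
          proof (rule sigma_sets.Basic, rule UN_I[of n])
            show "n \<in> I True" using n by (simp add: I_def)
            show "X n -` ball x \<delta> \<inter> space M \<in> G n"
              unfolding G_def by (rule CollectI, rule exI[of _ "ball x \<delta>"]) simp
          qed
        qed simp
      qed
      define M2 where "M2 = sigma (space M) (\<Union>i\<in>I False. G i)"
      have sub: "(\<Union>i\<in>I False. G i) \<subseteq> Pow (space M)" by (auto simp: G_def)
      have XM2: "X n \<in> borel_measurable M2" if "n \<ge> K" for n
      proof (rule measurableI)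
        show "X n \<omega> \<in> space borel" for \<omega> by simp
        fix S :: "'a set" assume "S \<in> sets borel"
        then have "X n -` S \<inter> space M \<in> (\<Union>i\<in>I False. G i)"
          using that by (auto simp: I_def G_def)
        then show "X n -` S \<inter> space M2 \<in> sets M2"
          unfolding M2_def using sub by (simp add: space_measure_of_conv sets_measure_of)
      qed
      have TM2: "T K \<in> borel_measurable M2"
      proof -
        have [measurable]: "X (n + K) \<in> borel_measurable M2" for n by (rule XM2) simp
        show ?thesis unfolding T_def by measurable
      qed
      have F_in: "F K \<in> sigma_sets (space M) (\<Union>i\<in>I False. G i)"
      proof -
        have "{\<omega> \<in> space M2. T K \<omega> < ennreal \<delta>} \<in> sets M2" using TM2 by measurable
        moreover have "space M2 = space M" unfolding M2_def using sub by (simp add: space_measure_of_conv)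
        ultimately show ?thesis unfolding F_def M2_def using sub by (simp add: sets_measure_of)
      qed
      have "P.prob (\<Inter>b\<in>UNIV. if b then E else F K) = (\<Prod>b\<in>UNIV. P.prob (if b then E else F K))"
        by (rule P.indep_setsD[OF ind2]) (use E_in F_in in auto)
      then have pEF: "P.prob (E \<inter> F K) = P.prob E * P.prob (F K)"
        by (simp add: UNIV_bool Int_commute)
      have "P.prob (\<Inter>n\<in>{..<K}. X n -` ball x \<delta> \<inter> space M) = (\<Prod>n\<in>{..<K}. P.prob (X n -` ball x \<delta> \<inter> space M))"
        by (rule P.indep_setsD[OF indG]) (auto simp: K_def G_def)
      then have pE: "P.prob E > 0" unfolding E_def using q by (simp add: prod_pos)
      have pEF0: "P.prob (E \<inter> F K) > 0" unfolding pEF using pE FN by (simp add: K_def)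
      have E_sets: "E \<in> sets M"
        using ind2 E_in unfolding P.indep_sets_def by blast
      have sub2: "E \<inter> F K \<inter> A \<subseteq> chi -` B \<inter> space M"
      proof
        fix \<omega> assume w: "\<omega> \<in> E \<inter> F K \<inter> A"
        then have wA: "\<omega> \<in> A" and wsp: "\<omega> \<in> space M" by (auto simp: A_def)
        have "norm ((\<Sum>n. c n *\<^sub>R X n \<omega>) - x) < \<delta> + \<delta>"
        proof (rule key_ineq[OF cs c0, of "\<lambda>n. X n \<omega>" K x \<delta> \<delta>])
          show "summable (\<lambda>n. c n * norm (X n \<omega>))" using wA unfolding A_def c_def by auto
          show "norm (X n \<omega> - x) < \<delta>" if "n < K" for n
          proof -
            have "\<omega> \<in> E" using w by blast
            then have "\<omega> \<in> X n -` ball x \<delta> \<inter> space M" using that unfolding E_def by blast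
            then have "X n \<omega> \<in> ball x \<delta>" by blast
            then show ?thesis by (simp add: dist_norm norm_minus_commute)
          qed
          show "(\<Sum>n. ennreal (c (n + K) * norm (X (n + K) \<omega> - x))) < ennreal \<delta>"
            using w unfolding F_def T_def by auto
          show "0 \<le> \<delta>" using d0 by simp
        qed
        moreover have "chi \<omega> = (\<Sum>n. c n *\<^sub>R X n \<omega>)" using chi_eq[OF wA] by (simp add: c_def)
        ultimately have "dist x (chi \<omega>) < \<epsilon>"
          by (simp add: dist_norm norm_minus_commute \<delta>_def)
        then have "chi \<omega> \<in> B" using e by auto
        then show "\<omega> \<in> chi -` B \<inter> space M" using wsp by simp
      qed
      have "measure M (E \<inter> F K \<inter> A) = measure M (E \<inter> F K)"
        by (rule measure_eq_AE) (use AEA E_sets F_sets A_sets in auto)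
      then have pos: "measure M (E \<inter> F K \<inter> A) > 0" using pEF0 by simp
      have "emeasure M (E \<inter> F K \<inter> A) \<le> emeasure M (chi -` B \<inter> space M)"
        by (rule emeasure_mono[OF sub2], rule measurable_sets[OF chi_meas], rule borel_open[OF B(1)])
      moreover have "emeasure M (E \<inter> F K \<inter> A) > 0"
        using pos by (simp add: P.emeasure_eq_measure)
      moreover have "emeasure (distr M borel chi) B = emeasure M (chi -` B \<inter> space M)"
        using B by (intro emeasure_distr) auto
      ultimately show "emeasure (distr M borel chi) B > 0" by simp
    qed
  qed
  with PA A_sets show ?thesis by simp
qed

end
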